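(* Let $(f_k(t))_{k=0,\ldots,n}$, $t\in[0,1]$, be a constant speed path with speed $v\neq 0$ and coefficients $\boldsymbol\alpha\in\mathcal A$, with $f_k(t)>0$ for all $k,t$, $f_k$ twice continuously differentiable and $\alpha_k$ continuously differentiable in $t$. Let $t^*\in(0,1)$ and suppose that at $t=t^*$: (1) $\alpha_k\le\alpha_{k+1}$ for all $k=0,\ldots,n-1$; (3) $\alpha_{k+1}(1-\alpha_{k+1})f_{k+1}^2-\alpha_{k+2}(1-\alpha_k)f_kf_{k+2}\ge0$ for all $k=0,\ldots,n-2$; (4) for all $k=0,\ldots,n-2$ we have $f_{k+1}^2-f_kf_{k+2}>0$ and $h_k\le\widetilde h_k$, where $$\widetilde h_k:=\frac{2g_kg_{k+1}f_{k+1}-g_k^2f_{k+2}-g_{k+1}^2f_k}{f_{k+1}^2-f_kf_{k+2}}$$ and $$h_k:=(1-\alpha_k)(1-\alpha_{k+1})f_k+2\alpha_{k+1}(1-\alpha_{k+1})f_{k+1}+\alpha_{k+1}\alpha_{k+2}f_{k+2}-\frac1v f_{k+1}\frac{\partial\alpha_{k+1}}{\partial t}$$ (all evaluated at $t^*$). Then the entropy $H(t)=-\sum_{k=0}^nf_k(t)\log f_k(t)$ satisfies $H''(t^* )\le0$.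
   Context: Fix an integer $n\ge1$. For a sequence $(a_k)_{k\in\mathbb Z}$ write $\nabla_1 a_k=a_k-a_{k-1}$. Functions indexed by $k$ are extended by $0$ outside their stated index range. $\mathcal A$ denotes the set of measurable $\boldsymbol\alpha(t)=(\alpha_0(t),\ldots,\alpha_n(t))$, $t\in[0,1]$, with $\alpha_0\equiv0$, $\alpha_n\equiv1$ and $0\le\alpha_k(t)\le1$ for all $k,t$. A family $(f_k(t))_{k=0,\ldots,n}$ of probability mass functions on $\{0,\ldots,n\}$ is a constant speed path with speed $v\in\mathbb R$ and coefficients $\boldsymbol\alpha\in\mathcal A$ if $\frac{\partial f_k}{\partial t}(t)=-v\,\nabla_1 g_k(t)$ for $k=0,\ldots,n$, where $g_k(t)=\alpha_{k+1}(t)f_{k+1}(t)+(1-\alpha_k(t))f_k(t)$ for $k=0,\ldots,n-1$ and $g_k=0$ for $k\notin\{0,\ldots,n-1\}$. *)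

theory Defs
  imports "HOL-Analysis.Analysis"
begin

definition coeffs_A :: "nat \<Rightarrow> (nat \<Rightarrow> real \<Rightarrow> real) \<Rightarrow> bool" where
  "coeffs_A n \<alpha> \<longleftrightarrow>
     (\<forall>k\<le>n. (\<alpha> k) \<in> borel_measurable (lebesgue_on {0..1})) \<and>
     (\<forall>t\<in>{0..1}. \<alpha> 0 t = 0 \<and> \<alpha> n t = 1 \<and> (\<forall>k\<le>n. 0 \<le> \<alpha> k t \<and> \<alpha> k t \<le> 1))"

definition gfun :: "nat \<Rightarrow> (nat \<Rightarrow> real \<Rightarrow> real) \<Rightarrow> (nat \<Rightarrow> real \<Rightarrow> real) \<Rightarrow> nat \<Rightarrow> real \<Rightarrow> real" where
  "gfun n \<alpha> f k t = (if k < n then \<alpha> (k+1) t * f (k+1) t + (1 - \<alpha> k t) * f k t else 0)"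

definition nabla1 :: "(nat \<Rightarrow> real) \<Rightarrow> nat \<Rightarrow> real" where
  "nabla1 a k = (if k = 0 then a 0 else a k - a (k - 1))"

definition pmf_family :: "nat \<Rightarrow> (nat \<Rightarrow> real \<Rightarrow> real) \<Rightarrow> bool" where
  "pmf_family n f \<longleftrightarrow> (\<forall>t\<in>{0..1}. (\<forall>k\<le>n. 0 \<le> f k t) \<and> (\<Sum>k\<le>n. f k t) = 1)"

definition const_speed_path ::
  "nat \<Rightarrow> (nat \<Rightarrow> real \<Rightarrow> real) \<Rightarrow> real \<Rightarrow> (nat \<Rightarrow> real \<Rightarrow> real) \<Rightarrow> bool" where
  "const_speed_path n f v \<alpha> \<longleftrightarrow> pmf_family n f \<and> coeffs_A n \<alpha> \<and>
     (\<forall>k\<le>n. \<forall>t\<in>{0..1}.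
        (f k has_real_derivative (- v * nabla1 (\<lambda>j. gfun n \<alpha> f j t) k)) (at t within {0..1}))"

end

theory Submission
  imports Defs
begin


lemma ln_bound: fixes y :: real assumes "1 \<le> y" shows "2 * ln y \<le> y - 1/y"
proof -
  let ?g = "\<lambda>x::real. x - 1/x - 2 * ln x"
  have "?g 1 \<le> ?g y"
  proof (rule deriv_nonneg_imp_mono[where g = ?g and g' = "\<lambda>x. 1 + 1/x^2 - 2/x"])
    fix x assume x: "x \<in> {1..y}"
    then have xp: "x > 0" by auto
    show "(?g has_real_derivative 1 + 1/x^2 - 2/x) (at x)"
      using xp apply (auto intro!: derivative_eq_intros)
      using xp by (simp add: diff_divide_distrib power2_eq_square)
    have "1 + 1/x^2 - 2/x = (1 - 1/x)^2" using xp by (simp add: power2_eq_square field_simps)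
    then show "1 + 1/x^2 - 2/x \<ge> 0" by simp
  qed (use assms in auto)
  then show ?thesis by simp
qed

lemma perk:
  fixes A B C a b h :: real
  assumes A: "A > 0" and B: "B > 0" and C: "C > 0" and K: "B^2 - A*C > 0"
    and hle: "h \<le> (2*a*b*B - a^2*C - b^2*A)/(B^2 - A*C)"
  shows "h*(ln A - 2*ln B + ln C) + (a^2/A + b^2/C - 2*a*b/B) \<ge> 0"
proof -
  define s where "s = sqrt (A*C)"
  have s0: "s > 0" using A C by (simp add: s_def)
  have ss: "s^2 = A*C" using A C by (simp add: s_def)
  have sB: "s < B" using K ss B s0 by (smt (verit) power_mono)
  define N where "N = 2*a*b*B - a^2*C - b^2*A"
  define Kk where "Kk = B^2 - A*C"
  define T where "T = a^2/A + b^2/C - 2*a*b/B"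
  define l where "l = ln A - 2*ln B + ln C"
  have lneg: "l < 0"
  proof -
    have "ln (A*C) < ln (B^2)" using A C K B by (subst ln_less_cancel_iff) auto
    then show ?thesis using A B C by (simp add: l_def ln_mult ln_realpow)
  qed
  have hl: "h * l \<ge> (N/Kk) * l" using mult_right_mono_neg[OF hle, of l] lneg by (simp add: N_def Kk_def)
  have Kp: "Kk > 0" using K by (simp add: Kk_def)
  define L where "L = - l / Kk"
  have L0: "L > 0" using lneg Kp by (simp add: L_def divide_neg_pos)
  have NKl: "(N/Kk) * l = - (N * L)" by (simp add: L_def)
  have amgm: "(a^2*C + b^2*A) \<ge> (2*a*b* s)"
  proof -
    have "0 \<le> (a*C - b* s)^2" by simp
    also have "\<dots> = C*(a^2*C + b^2*A - 2*a*b* s)" using ss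
      by (simp add: power2_eq_square algebra_simps)
    finally show ?thesis using C by (simp add: zero_le_mult_iff)
  qed
  have T_eq: "T = (a^2*C + b^2*A)/(A*C) - 2*a*b/B" using A C by (simp add: T_def field_simps)
  have T0: "T \<ge> 0"
  proof (cases "a*b \<le> 0")
    case True
    have "(a^2*C + b^2*A)/(A*C) \<ge> 0" using A C by simp
    moreover have "2*a*b/B \<le> 0" using True B by (simp add: divide_nonpos_pos)
    ultimately show ?thesis using T_eq by linarith
  next
    case False
    have "(a^2*C + b^2*A)/(A*C) \<ge> 2*a*b* s/s^2" using amgm ss A C
      by (simp add: divide_right_mono)
    also have "2*a*b* s/s^2 = 2*a*b/s" using s0 by (simp add: power2_eq_square)
    also have "2*a*b/s \<ge> 2*a*b/B" using False sB s0 by (intro divide_left_mono) auto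
    finally show ?thesis using T_eq by linarith
  qed
  have NL: "N * L \<le> T"
  proof (cases "N \<le> 0")
    case True then show ?thesis using L0 T0 by (smt (verit) mult_nonpos_nonneg)
  next
    case False
    then have Np: "N > 0" by simp
    have ab: "a*b > 0"
    proof (rule ccontr)
      assume "\<not> a*b > 0"
      then have "2*a*b*B \<le> 0" using B by (simp add: mult_nonpos_nonneg)
      moreover have "a^2*C \<ge> 0" "b^2*A \<ge> 0" using A C by auto
      ultimately show False using Np N_def by linarith
    qed
    define y where "y = B/s"
    have y1: "y \<ge> 1" using sB s0 by (simp add: y_def)
    have ly: "-l = 2 * ln y"
    proof -
      have "ln A + ln C = ln (A*C)" using A C by (simp add: ln_mult)
      also have "\<dots> = ln (s^2)" using ss by simp
      also have "\<dots> = 2 * ln s" using s0 by (simp add: ln_realpow)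
      finally show ?thesis using B s0 by (simp add: l_def y_def ln_div)
    qed
    have "L = 2 * ln y / Kk" using ly by (simp add: L_def)
    also have "\<dots> \<le> (y - 1/y)/Kk" using ln_bound[OF y1] Kp by (simp add: divide_right_mono)
    also have "(y - 1/y) = Kk/(B* s)" using s0 B ss by (simp add: y_def Kk_def field_simps power2_eq_square)
    also have "Kk/(B* s)/Kk = 1/(B* s)" using Kp by simp
    finally have LB: "L \<le> 1/(B* s)" .
    have "N*L \<le> N*(1/(B* s))" using LB Np by (intro mult_left_mono) auto
    also have "N*(1/(B* s)) = N/(B* s)" by simp
    also have "N/(B* s) \<le> T"
    proof -
      have e: "T - N/(B* s) = (a^2*C + b^2*A)*(1/(A*C) + 1/(B* s)) - 2*a*b*(1/B + 1/s)"
        using A B C s0 by (simp add: T_def N_def field_simps)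
      have "(a^2*C + b^2*A)*(1/(A*C) + 1/(B* s)) \<ge> (2*a*b* s)*(1/(A*C) + 1/(B* s))"
        using amgm A B C s0 by (intro mult_right_mono) auto
      also have "(2*a*b* s)*(1/(A*C) + 1/(B* s)) = 2*a*b*(1/B + 1/s)"
        using s0 B ss[symmetric] by (simp add: field_simps power2_eq_square)
      finally show ?thesis using e by linarith
    qed
    finally show ?thesis .
  qed
  show ?thesis using hl NKl NL by (simp add: l_def[symmetric] T_def[symmetric])
qed

lemma tele: "(\<Sum>k\<le>m. nabla1 x k) = x m"
  by (induction m) (auto simp: nabla1_def)

lemma sbp: "(\<Sum>k\<le>m. nabla1 x k * y k) = (\<Sum>k<m. x k * (y k - y (Suc k))) + x m * y m"
  by (induction m) (auto simp: nabla1_def algebra_simps)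

lemma abel: "(\<Sum>k\<le>m. x k * (d k::real)) = (\<Sum>j\<le>m. x j) * d m - (\<Sum>k<m. (\<Sum>j\<le>k. x j) * (d (Suc k) - d k))"
  by (induction m) (auto simp: algebra_simps)

lemma sqsum: "(\<Sum>k\<le>m. (nabla1 g k)^2 / (f k::real)) = (\<Sum>k\<le>m. (g k)^2/f k) + (\<Sum>k<m. (g k)^2 / f (Suc k)) - 2*(\<Sum>k<m. g k * g (Suc k) / f (Suc k))"
  by (induction m) (auto simp: nabla1_def power2_eq_square algebra_simps add_divide_distrib diff_divide_distrib)



lemma core:
  fixes n :: nat and f a ad g fd gd :: "nat \<Rightarrow> real" and v :: real
  assumes n: "n \<ge> 1" and v: "v \<noteq> 0"
    and fpos: "\<forall>k\<le>n. f k > 0"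
    and a0: "a 0 = 0" and an: "a n = 1" and ad0: "ad 0 = 0" and adn: "ad n = 0"
    and g_def: "g = (\<lambda>k. if k < n then a (k+1) * f (k+1) + (1 - a k) * f k else 0)"
    and fd_def: "fd = (\<lambda>k. - v * nabla1 g k)"
    and gd_def: "gd = (\<lambda>k. if k < n then ad (k+1) * f (k+1) + a (k+1) * fd (k+1) - ad k * f k + (1 - a k) * fd k else 0)"
    and c4: "\<forall>k. k + 2 \<le> n \<longrightarrow> f (k+1)^2 - f k * f (k+2) > 0 \<and>
        (1 - a k) * (1 - a (k+1)) * f k + 2 * a (k+1) * (1 - a (k+1)) * f (k+1) + a (k+1) * a (k+2) * f (k+2) - (1/v) * f (k+1) * ad (k+1)
        \<le> (2 * g k * g (k+1) * f (k+1) - (g k)^2 * f (k+2) - (g (k+1))^2 * f k) / (f (k+1)^2 - f k * f (k+2))"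
  shows "- (\<Sum>k\<le>n. (- v * nabla1 gd k) * (ln (f k) + 1) + fd k * (fd k / f k)) \<le> 0"
proof -
  define lf where "lf k = ln (f k)" for k
  define G where "G k = (\<Sum>j\<le>k. gd j)" for k
  define hk where "hk k = (1 - a k) * (1 - a (k+1)) * f k + 2 * a (k+1) * (1 - a (k+1)) * f (k+1) + a (k+1) * a (k+2) * f (k+2) - (1/v) * f (k+1) * ad (k+1)" for k
  define ell where "ell k = ln (f k) - 2 * ln (f (k+1)) + ln (f (k+2))" for k
  define T where "T k = (g k)^2 / f k + (g (k+1))^2 / f (k+2) - 2 * g k * g (k+1) / f (k+1)" for k
  obtain m where m: "n = Suc m" using n by (cases n) auto
  have gdn: "gd n = 0" by (simp add: gd_def)
  have gn: "g n = 0" by (simp add: g_def)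
  have S0: "(\<Sum>k\<le>n. - v * nabla1 gd k) = 0"
  proof -
    have "(\<Sum>k\<le>n. - v * nabla1 gd k) = - v * (\<Sum>k\<le>n. nabla1 gd k)" by (simp add: sum_distrib_left)
    then show ?thesis using tele[where x=gd and m=n] gdn by simp
  qed
  have S1a: "(\<Sum>k\<le>n. (- v * nabla1 gd k) * lf k) = - v * (\<Sum>k\<le>n. nabla1 gd k * lf k)"
    by (simp add: sum_distrib_left mult.assoc)
  have S1b: "(\<Sum>k\<le>n. nabla1 gd k * lf k) = - (\<Sum>k<n. gd k * (lf (Suc k) - lf k))"
    using sbp[where x=gd and y=lf and m=n] gdn by (simp add: sum_negf[symmetric] algebra_simps)
  have Gf: "k < n \<Longrightarrow> G k = ad (k+1) * f (k+1) - v * ((1 - a (k+1)) * g k + a (k+1) * g (k+1))" for k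
  proof (induction k)
    case 0
    then show ?case by (simp add: G_def gd_def fd_def nabla1_def a0 ad0 algebra_simps)
  next
    case (Suc k)
    then have IH: "G k = ad (k+1) * f (k+1) - v * ((1 - a (k+1)) * g k + a (k+1) * g (k+1))" by simp
    have "G (Suc k) = G k + gd (Suc k)" by (simp add: G_def)
    also have "gd (Suc k) = ad (k+2) * f (k+2) + a (k+2) * (- v * (g (k+2) - g (k+1))) - ad (k+1) * f (k+1) + (1 - a (k+1)) * (- v * (g (k+1) - g k))"
      using Suc.prems by (simp add: gd_def fd_def nabla1_def)
    finally show ?case using IH by (simp add: algebra_simps)
  qed
  have Gm: "G m = 0" using Gf[of m] m an adn gn by simp
  have Gk: "k < m \<Longrightarrow> G k = - v * hk k" for k
  proof -
    assume k: "k < m"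
    define Qd where "Qd = (1 - a k) * (1 - a (k+1)) * f k + 2 * a (k+1) * (1 - a (k+1)) * f (k+1) + a (k+1) * a (k+2) * f (k+2)"
    have E: "(1 - a (k+1)) * g k + a (k+1) * g (k+1) = Qd"
      using k m by (simp add: g_def Qd_def algebra_simps)
    have G1: "G k = ad (k+1) * f (k+1) - v * Qd" using Gf[of k] E k m by simp
    have "hk k = Qd - (1/v) * f (k+1) * ad (k+1)" by (simp add: hk_def Qd_def)
    then have "- v * hk k = ad (k+1) * f (k+1) - v * Qd" using v by (simp add: right_diff_distrib)
    then show ?thesis using G1 by simp
  qed
  have abel': "(\<Sum>k<n. gd k * (lf (Suc k) - lf k)) = - (\<Sum>k<m. G k * ell k)"
  proof -
    have "(\<Sum>k<n. gd k * (lf (Suc k) - lf k)) = (\<Sum>k\<le>m. gd k * (lf (Suc k) - lf k))"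
      using m lessThan_Suc_atMost by simp
    also have "\<dots> = G m * (lf (Suc m) - lf m) - (\<Sum>k<m. G k * ((lf (Suc (Suc k)) - lf (Suc k)) - (lf (Suc k) - lf k)))"
      using abel[where x=gd and d="\<lambda>k. lf (Suc k) - lf k" and m=m] by (simp add: G_def)
    also have "\<dots> = - (\<Sum>k<m. G k * ell k)"
      using Gm by (simp add: ell_def lf_def algebra_simps)
    finally show ?thesis .
  qed
  have SF: "(\<Sum>k\<le>n. (- v * nabla1 gd k) * lf k) = v^2 * (\<Sum>k<m. hk k * ell k)"
  proof -
    have "(\<Sum>k<m. G k * ell k) = - v * (\<Sum>k<m. hk k * ell k)"
      using Gk by (simp add: sum_distrib_left mult.assoc)
    then show ?thesis using S1a S1b abel' by (simp add: power2_eq_square)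
  qed
  have SQ: "(\<Sum>k\<le>n. fd k * (fd k / f k)) = v^2 * (\<Sum>k\<le>n. (nabla1 g k)^2 / f k)"
    by (simp add: fd_def sum_distrib_left power2_eq_square algebra_simps)
  have Qge: "(\<Sum>k\<le>n. (nabla1 g k)^2 / f k) \<ge> (\<Sum>k<m. T k)"
  proof -
    have e: "(\<Sum>k\<le>n. (nabla1 g k)^2 / f k) = (\<Sum>k\<le>n. (g k)^2/f k) + (\<Sum>k<n. (g k)^2 / f (Suc k)) - 2*(\<Sum>k<n. g k * g (Suc k) / f (Suc k))"
      by (rule sqsum)
    have i1: "(\<Sum>k\<le>n. (g k)^2/f k) \<ge> (\<Sum>k<m. (g k)^2/f k)"
      using fpos m by (intro sum_mono2) auto
    have i2: "(\<Sum>k<n. (g k)^2 / f (Suc k)) \<ge> (\<Sum>k<m. (g (Suc k))^2 / f (Suc (Suc k)))"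
    proof -
      have "(\<Sum>k<n. (g k)^2 / f (Suc k)) = (g 0)^2 / f (Suc 0) + (\<Sum>k<m. (g (Suc k))^2 / f (Suc (Suc k)))"
        unfolding m by (rule sum.lessThan_Suc_shift)
      moreover have "(g 0)^2 / f (Suc 0) \<ge> 0" using fpos m by (intro divide_nonneg_pos) auto
      ultimately show ?thesis by linarith
    qed
    have i3: "(\<Sum>k<n. g k * g (Suc k) / f (Suc k)) = (\<Sum>k<m. g k * g (Suc k) / f (Suc k))"
      using m gn by simp
    have "(\<Sum>k<m. T k) = (\<Sum>k<m. (g k)^2/f k) + (\<Sum>k<m. (g (Suc k))^2 / f (Suc (Suc k))) - 2*(\<Sum>k<m. g k * g (Suc k) / f (Suc k))"
      by (simp add: T_def sum.distrib sum_subtractf sum_distrib_left mult.assoc)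
    then show ?thesis using e i1 i2 i3 by linarith
  qed
  have perks: "(\<Sum>k<m. hk k * ell k + T k) \<ge> 0"
  proof (rule sum_nonneg)
    fix k assume "k \<in> {..<m}"
    then have k: "k + 2 \<le> n" using m by auto
    have A: "f k > 0" "f (k+1) > 0" "f (k+2) > 0" using fpos k by auto
    from c4 k have c: "f (k+1)^2 - f k * f (k+2) > 0" "hk k \<le> (2 * g k * g (k+1) * f (k+1) - (g k)^2 * f (k+2) - (g (k+1))^2 * f k) / (f (k+1)^2 - f k * f (k+2))"
      by (auto simp: hk_def)
    from perk[OF A c] show "hk k * ell k + T k \<ge> 0" by (simp add: ell_def T_def)
  qed
  have "(\<Sum>k\<le>n. (- v * nabla1 gd k) * (ln (f k) + 1) + fd k * (fd k / f k))
      = (\<Sum>k\<le>n. (- v * nabla1 gd k) * lf k) + (\<Sum>k\<le>n. - v * nabla1 gd k) + (\<Sum>k\<le>n. fd k * (fd k / f k))"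
    unfolding lf_def sum.distrib[symmetric] by (rule sum.cong) (auto simp: algebra_simps)
  also have "\<dots> = v^2 * (\<Sum>k<m. hk k * ell k) + v^2 * (\<Sum>k\<le>n. (nabla1 g k)^2 / f k)"
    using SF S0 SQ by simp
  also have "\<dots> \<ge> v^2 * (\<Sum>k<m. hk k * ell k) + v^2 * (\<Sum>k<m. T k)"
    using Qge by (simp add: mult_left_mono)
  finally have "(\<Sum>k\<le>n. (- v * nabla1 gd k) * (ln (f k) + 1) + fd k * (fd k / f k)) \<ge> v^2 * (\<Sum>k<m. hk k * ell k + T k)"
    by (simp add: sum.distrib distrib_left)
  moreover have "v^2 * (\<Sum>k<m. hk k * ell k + T k) \<ge> 0" using perks by simp
  ultimately show ?thesis by linarith
qed



theorem theorem4p4: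
  fixes n :: nat and f \<alpha> :: "nat \<Rightarrow> real \<Rightarrow> real" and v tstar :: real
  assumes n: "n \<ge> 1"
    and path: "const_speed_path n f v \<alpha>"
    and v: "v \<noteq> 0"
    and fpos: "\<forall>k\<le>n. \<forall>t\<in>{0..1}. f k t > 0"
    and fC2: "\<forall>k\<le>n. \<exists>f' f''.
        (\<forall>t\<in>{0..1}. (f k has_real_derivative f' t) (at t within {0..1})
                    \<and> (f' has_real_derivative f'' t) (at t within {0..1}))
        \<and> continuous_on {0..1} f''"
    and \<alpha>C1: "\<forall>k\<le>n. \<exists>a'.
        (\<forall>t\<in>{0..1}. (\<alpha> k has_real_derivative a' t) (at t within {0..1}))
        \<and> continuous_on {0..1} a'"
    and t: "0 < tstar" "tstar < 1"
    and c1: "\<forall>k<n. \<alpha> k tstar \<le> \<alpha> (k+1) tstar"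
    and c3: "\<forall>k. k + 2 \<le> n \<longrightarrow>
        \<alpha> (k+1) tstar * (1 - \<alpha> (k+1) tstar) * (f (k+1) tstar)^2
        - \<alpha> (k+2) tstar * (1 - \<alpha> k tstar) * f k tstar * f (k+2) tstar \<ge> 0"
    and c4: "\<forall>k. k + 2 \<le> n \<longrightarrow>
        (let g = (\<lambda>j. gfun n \<alpha> f j tstar);
             fk = f k tstar; fk1 = f (k+1) tstar; fk2 = f (k+2) tstar;
             ak = \<alpha> k tstar; ak1 = \<alpha> (k+1) tstar; ak2 = \<alpha> (k+2) tstar;
             htil = (2 * g k * g (k+1) * fk1 - (g k)^2 * fk2 - (g (k+1))^2 * fk)
                    / (fk1^2 - fk * fk2);
             h = (1 - ak) * (1 - ak1) * fk + 2 * ak1 * (1 - ak1) * fk1 + ak1 * ak2 * fk2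
                 - (1 / v) * fk1 * deriv (\<alpha> (k+1)) tstar
         in fk1^2 - fk * fk2 > 0 \<and> h \<le> htil)"
  shows "deriv (deriv (\<lambda>t. - (\<Sum>k\<le>n. f k t * ln (f k t)))) tstar \<le> 0"
proof -
  define T where "T = {0<..<(1::real)}"
  have openT: "open T" by (simp add: T_def)
  have tT: "tstar \<in> T" using t by (simp add: T_def)
  have TI: "t \<in> T \<Longrightarrow> t \<in> {0..1}" for t by (auto simp: T_def)
  have atw: "t \<in> T \<Longrightarrow> at t within {0..1} = at t" for t
    by (rule at_within_interior) (simp add: T_def)
  from path have coef: "coeffs_A n \<alpha>"
    and fder: "\<forall>k\<le>n. \<forall>t\<in>{0..1}. (f k has_real_derivative (- v * nabla1 (\<lambda>j. gfun n \<alpha> f j t) k)) (at t within {0..1})"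
    by (auto simp: const_speed_path_def)
  have "\<forall>k. \<exists>a'. k \<le> n \<longrightarrow> (\<forall>t\<in>{0..1}. (\<alpha> k has_real_derivative a' t) (at t within {0..1}))"
    using \<alpha>C1 by blast
  then obtain AD where AD: "\<And>k. k \<le> n \<Longrightarrow> (\<forall>t\<in>{0..1}. (\<alpha> k has_real_derivative AD k t) (at t within {0..1}))"
    using choice[of "\<lambda>k a'. k \<le> n \<longrightarrow> (\<forall>t\<in>{0..1}. (\<alpha> k has_real_derivative a' t) (at t within {0..1}))"] by blast
  define fdt where "fdt k t = - v * nabla1 (\<lambda>j. gfun n \<alpha> f j t) k" for k t
  have fD: "k \<le> n \<Longrightarrow> t \<in> T \<Longrightarrow> (f k has_real_derivative fdt k t) (at t)" for k t
  proof -
    assume k: "k \<le> n" and tt: "t \<in> T"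
    have "(f k has_real_derivative fdt k t) (at t within {0..1})"
      using fder k TI[OF tt] by (simp add: fdt_def)
    then show ?thesis using atw[OF tt] by simp
  qed
  have aD: "k \<le> n \<Longrightarrow> t \<in> T \<Longrightarrow> (\<alpha> k has_real_derivative AD k t) (at t)" for k t
  proof -
    assume k: "k \<le> n" and tt: "t \<in> T"
    have "(\<alpha> k has_real_derivative AD k t) (at t within {0..1})"
      using AD[OF k] TI[OF tt] by simp
    then show ?thesis using atw[OF tt] by simp
  qed
  have fposT: "k \<le> n \<Longrightarrow> t \<in> T \<Longrightarrow> f k t > 0" for k t using fpos TI by auto
  define H where "H = (\<lambda>t. - (\<Sum>k\<le>n. f k t * ln (f k t)))"
  define Hd where "Hd t = - (\<Sum>k\<le>n. fdt k t * (ln (f k t) + 1))" for t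
  have HD: "t \<in> T \<Longrightarrow> (H has_real_derivative Hd t) (at t)" for t
  proof -
    assume tT': "t \<in> T"
    have "((\<lambda>t. \<Sum>k\<le>n. f k t * ln (f k t)) has_real_derivative (\<Sum>k\<le>n. fdt k t * (ln (f k t) + 1))) (at t)"
    proof (rule DERIV_sum)
      fix k assume "k \<in> {..n}"
      then have k: "k \<le> n" by simp
      have Lk: "((\<lambda>t. ln (f k t)) has_real_derivative 1 / f k t * fdt k t) (at t)"
        by (rule DERIV_chain2[OF DERIV_ln_divide[OF fposT[OF k tT']] fD[OF k tT']])
      have "((\<lambda>t. f k t * ln (f k t)) has_real_derivative fdt k t * ln (f k t) + (1 / f k t * fdt k t) * f k t) (at t)"
        by (rule DERIV_mult[OF fD[OF k tT'] Lk])
      then show "((\<lambda>t. f k t * ln (f k t)) has_real_derivative fdt k t * (ln (f k t) + 1)) (at t)"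
        using fposT[OF k tT'] by (simp add: algebra_simps)
    qed
    from DERIV_minus[OF this] show ?thesis by (simp add: H_def Hd_def)
  qed
  have dH: "t \<in> T \<Longrightarrow> deriv H t = Hd t" for t using HD by (rule DERIV_imp_deriv)
  define gdt where "gdt j = (if j < n then AD (j+1) tstar * f (j+1) tstar + \<alpha> (j+1) tstar * fdt (j+1) tstar - AD j tstar * f j tstar + (1 - \<alpha> j tstar) * fdt j tstar else 0)" for j
  have gD: "((\<lambda>t. gfun n \<alpha> f j t) has_real_derivative gdt j) (at tstar)" for j
  proof (cases "j < n")
    case True
    have e: "(\<lambda>t. gfun n \<alpha> f j t) = (\<lambda>t. \<alpha> (j+1) t * f (j+1) t + (1 - \<alpha> j t) * f j t)"
      using True by (simp add: gfun_def fun_eq_iff)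
    have j1: "j + 1 \<le> n" "j \<le> n" using True by auto
    have "((\<lambda>t. \<alpha> (j+1) t * f (j+1) t + (1 - \<alpha> j t) * f j t) has_real_derivative
          (AD (j+1) tstar * f (j+1) tstar + fdt (j+1) tstar * \<alpha> (j+1) tstar) + ((0 - AD j tstar) * f j tstar + fdt j tstar * (1 - \<alpha> j tstar))) (at tstar)"
      by (intro DERIV_add DERIV_mult DERIV_diff DERIV_const aD fD j1 tT)
    then show ?thesis using True e by (simp add: gdt_def algebra_simps)
  next
    case False
    then show ?thesis by (simp add: gfun_def gdt_def)
  qed
  have fdD: "((\<lambda>t. fdt k t) has_real_derivative - v * nabla1 gdt k) (at tstar)" for k
  proof (cases "k = 0")
    case True
    have "((\<lambda>t. - v * gfun n \<alpha> f 0 t) has_real_derivative - v * gdt 0) (at tstar)"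
      by (rule DERIV_cmult[OF gD[of 0]])
    then show ?thesis using True by (simp add: fdt_def nabla1_def)
  next
    case False
    have "((\<lambda>t. - v * (gfun n \<alpha> f k t - gfun n \<alpha> f (k-1) t)) has_real_derivative - v * (gdt k - gdt (k-1))) (at tstar)"
      by (rule DERIV_cmult[OF DERIV_diff[OF gD[of k] gD[of "k-1"]]])
    then show ?thesis using False by (simp add: fdt_def nabla1_def)
  qed
  define X where "X = - (\<Sum>k\<le>n. (- v * nabla1 gdt k) * (ln (f k tstar) + 1) + fdt k tstar * (fdt k tstar / f k tstar))"
  have HdD: "(Hd has_real_derivative X) (at tstar)"
  proof -
    have "((\<lambda>t. \<Sum>k\<le>n. fdt k t * (ln (f k t) + 1)) has_real_derivative (\<Sum>k\<le>n. (- v * nabla1 gdt k) * (ln (f k tstar) + 1) + fdt k tstar * (fdt k tstar / f k tstar))) (at tstar)"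
    proof (rule DERIV_sum)
      fix k assume "k \<in> {..n}"
      then have k: "k \<le> n" by simp
      have Lk: "((\<lambda>t. ln (f k t)) has_real_derivative 1 / f k tstar * fdt k tstar) (at tstar)"
        by (rule DERIV_chain2[OF DERIV_ln_divide[OF fposT[OF k tT]] fD[OF k tT]])
      have L: "((\<lambda>t. ln (f k t) + 1) has_real_derivative fdt k tstar / f k tstar + 0) (at tstar)"
        using DERIV_add[OF Lk DERIV_const[of 1]] by simp
      have "((\<lambda>t. fdt k t * (ln (f k t) + 1)) has_real_derivative (- v * nabla1 gdt k) * (ln (f k tstar) + 1) + (fdt k tstar / f k tstar + 0) * fdt k tstar) (at tstar)"
        by (rule DERIV_mult[OF fdD L])
      then show "((\<lambda>t. fdt k t * (ln (f k t) + 1)) has_real_derivative (- v * nabla1 gdt k) * (ln (f k tstar) + 1) + fdt k tstar * (fdt k tstar / f k tstar)) (at tstar)"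
        by (simp add: algebra_simps)
    qed
    from DERIV_minus[OF this] show ?thesis unfolding Hd_def[abs_def] X_def by simp
  qed
  have "(deriv H has_real_derivative X) (at tstar)"
    by (rule has_field_derivative_transform_within_open[OF HdD openT tT]) (simp add: dH)
  then have DD: "deriv (deriv H) tstar = X" by (rule DERIV_imp_deriv)
  have a0: "\<alpha> 0 tstar = 0" and an: "\<alpha> n tstar = 1"
    using coef t by (auto simp: coeffs_A_def)
  have const_deriv: "AD k tstar = 0" if k: "k \<le> n" and c: "\<forall>t\<in>{0..1}. \<alpha> k t = c" for k c
  proof -
    have "((\<lambda>t. c) has_real_derivative 0) (at tstar)" by simp
    then have "(\<alpha> k has_real_derivative 0) (at tstar)"
      by (rule has_field_derivative_transform_within_open[OF _ openT tT]) (use c TI in auto)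
    then show ?thesis using aD[OF k tT] by (rule DERIV_unique[symmetric])
  qed
  have ad0: "AD 0 tstar = 0" using coef by (intro const_deriv[of 0 0]) (auto simp: coeffs_A_def)
  have adn: "AD n tstar = 0" using coef by (intro const_deriv[of n 1]) (auto simp: coeffs_A_def)
  have dAD: "k \<le> n \<Longrightarrow> deriv (\<alpha> k) tstar = AD k tstar" for k using aD[OF _ tT] by (rule DERIV_imp_deriv)
  have c4': "\<forall>k. k + 2 \<le> n \<longrightarrow> f (k+1) tstar ^2 - f k tstar * f (k+2) tstar > 0 \<and>
        (1 - \<alpha> k tstar) * (1 - \<alpha> (k+1) tstar) * f k tstar + 2 * \<alpha> (k+1) tstar * (1 - \<alpha> (k+1) tstar) * f (k+1) tstar + \<alpha> (k+1) tstar * \<alpha> (k+2) tstar * f (k+2) tstar - (1/v) * f (k+1) tstar * AD (k+1) tstar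
        \<le> (2 * gfun n \<alpha> f k tstar * gfun n \<alpha> f (k+1) tstar * f (k+1) tstar - (gfun n \<alpha> f k tstar)^2 * f (k+2) tstar - (gfun n \<alpha> f (k+1) tstar)^2 * f k tstar) / (f (k+1) tstar ^2 - f k tstar * f (k+2) tstar)"
  proof (intro allI impI)
    fix k assume k: "k + 2 \<le> n"
    then have "deriv (\<alpha> (k+1)) tstar = AD (k+1) tstar" by (intro dAD) auto
    then show "f (k+1) tstar ^2 - f k tstar * f (k+2) tstar > 0 \<and>
        (1 - \<alpha> k tstar) * (1 - \<alpha> (k+1) tstar) * f k tstar + 2 * \<alpha> (k+1) tstar * (1 - \<alpha> (k+1) tstar) * f (k+1) tstar + \<alpha> (k+1) tstar * \<alpha> (k+2) tstar * f (k+2) tstar - (1/v) * f (k+1) tstar * AD (k+1) tstar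
        \<le> (2 * gfun n \<alpha> f k tstar * gfun n \<alpha> f (k+1) tstar * f (k+1) tstar - (gfun n \<alpha> f k tstar)^2 * f (k+2) tstar - (gfun n \<alpha> f (k+1) tstar)^2 * f k tstar) / (f (k+1) tstar ^2 - f k tstar * f (k+2) tstar)"
      using spec[OF c4, of k] k by (simp add: Let_def)
  qed
  have "X \<le> 0" unfolding X_def
  proof (rule core[where f="\<lambda>k. f k tstar" and a="\<lambda>k. \<alpha> k tstar" and ad="\<lambda>k. AD k tstar"
        and g="\<lambda>j. gfun n \<alpha> f j tstar" and fd="\<lambda>k. fdt k tstar" and gd=gdt, OF n v])
    show "\<forall>k\<le>n. f k tstar > 0" using fposT tT by auto
    show "(\<lambda>j. gfun n \<alpha> f j tstar) = (\<lambda>k. if k < n then \<alpha> (k+1) tstar * f (k+1) tstar + (1 - \<alpha> k tstar) * f k tstar else 0)"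
      by (simp add: gfun_def fun_eq_iff)
    show "(\<lambda>k. fdt k tstar) = (\<lambda>k. - v * nabla1 (\<lambda>j. gfun n \<alpha> f j tstar) k)"
      by (simp add: fdt_def fun_eq_iff)
    show "gdt = (\<lambda>k. if k < n then AD (k+1) tstar * f (k+1) tstar + \<alpha> (k+1) tstar * fdt (k+1) tstar - AD k tstar * f k tstar + (1 - \<alpha> k tstar) * fdt k tstar else 0)"
      by (simp add: gdt_def fun_eq_iff)
  qed (use a0 an ad0 adn c4' in auto)
  then show ?thesis using DD by (simp add: H_def)
qed

end
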